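(* Consider the algorithm SR-DFF run with input $m$ on a stream consistent with a representation $\mathcal{G}$ of size $m$ with at most $k$ exceptions. For any two valid non-corrupted rules $C[x]$ and $C[x']$ that exist at the same time in the rule list $L$, $G(x)\neq G(x')$.
   Context: Setting. $\mathcal{X}$ is a domain, $\mathcal{Y}$ a finite label set, $\Phi$ a set of binary features on $\mathcal{X}$ closed under negation. A representation of size $m$ is a cover $\mathcal{G}=\{G_1,\dots,G_m\}$ of $\mathcal{X}$ by components with labels $\ell(G)$; each $x$ has a fixed component $G(x)\ni x$; $c^*(x)=\ell(G(x))$; for components $G_i,G_j$ with different labels there is $\phi(G_i,G_j)\in\Phi$ true on all of $G_i$ and false on all of $G_j$, with $\phi(G_j,G_i)=\neg\phi(G_i,G_j)$. Protocol: the learner first gets $x_0$ with label $y_0$; then each example $x_t$ arrives, the learner predicts a label with an explanation example previously seen with that label; on a mistake the teacher gives $y_t=c^*(x_t)$ and $\phi(G(x_t),G(\hat x_t))$, $\hat x_t$ the explanation. An exception is an example on which the feedback is inconsistent with the representation/protocol; a stream is consistent with $\mathcal{G}$ with at most $k$ exceptions if at most $k$ examples are exceptions. Non-exception examples are called valid. SR-DFF (input $m$): receives $(x_0,y_0)$; maintains a list $L$ of rules, each indexed by a representative example $x$, with a conjunction $C[x]$ of features and a label $\texttt{label}[x]$. On $x_t$: if some $C[\hat x]\in L$ is satisfied by $x_t$, predict $\texttt{label}[\hat x]$ with explanation $\hat x$; if incorrect, receive $y_t,\phi$, set $C[\hat x]:=C[\hat x]\wedge\neg\phi$, and delete the rule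 if $C[\hat x]$ has at least $m$ features. Otherwise predict $y_0$ with explanation $x_0$; if incorrect, receive $y_t,\phi$ and add a new rule with empty conjunction $C[x_t]$ and $\texttt{label}[x_t]=y_t$. A rule $C[x]$ is valid if $x$ is a valid example. A rule is corrupted if at least one of the features in its conjunction was added during a refinement step triggered by an example $x_t$ that was an exception. *)

theory Defs
  imports Main
begin

type_synonym 'x feat = "'x \<Rightarrow> bool"

(* A rule of SR-DFF: (creation time s of its representative example x_s,
   (conjunction, label)).  The conjunction is a list of entries (u, f):
   feature f was added during the refinement step triggered by example x_u. *)
type_synonym ('x,'y) rule = "nat \<times> ((nat \<times> 'x feat) list \<times> 'y)"

(* Representation of size m: components G 0 .. G (m-1), labels ell i,
   fixed component index gi x of each x, separating features sep i j. *)
definition representation ::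
  "'x feat set \<Rightarrow> nat \<Rightarrow> (nat \<Rightarrow> 'x set) \<Rightarrow> (nat \<Rightarrow> 'y) \<Rightarrow> ('x \<Rightarrow> nat)
   \<Rightarrow> (nat \<Rightarrow> nat \<Rightarrow> 'x feat) \<Rightarrow> bool" where
  "representation Phi m G ell gi sep \<longleftrightarrow>
     (\<forall>f\<in>Phi. (\<lambda>z. \<not> f z) \<in> Phi) \<and>
     (\<Union>i<m. G i) = UNIV \<and>
     (\<forall>x. gi x < m \<and> x \<in> G (gi x)) \<and>
     (\<forall>i<m. \<forall>j<m. ell i \<noteq> ell j \<longrightarrow>
        sep i j \<in> Phi \<and> (\<forall>z\<in>G i. sep i j z) \<and> (\<forall>z\<in>G j. \<not> sep i j z) \<and>
        sep j i = (\<lambda>z. \<not> sep i j z))"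

definition sat :: "'x \<Rightarrow> (nat \<times> 'x feat) list \<Rightarrow> bool" where
  "sat x C \<longleftrightarrow> (\<forall>(u,f)\<in>set C. f x)"

(* predicted label when the explanation is x_e (e = 0: default x_0 with label y_0) *)
definition pred :: "'y \<Rightarrow> ('x,'y) rule list \<Rightarrow> nat \<Rightarrow> 'y" where
  "pred y0 L e = (if e = 0 then y0 else snd (the (map_of L e)))"

(* One step of SR-DFF (input m) on example xs t with teacher label ys t and
   teacher feature phis t (used only on a mistake); e is the time index of the
   explanation example x_e chosen by the learner; L is the current rule list,
   L' the rule list afterwards. *)
definition sr_step ::
  "nat \<Rightarrow> (nat \<Rightarrow> 'x) \<Rightarrow> (nat \<Rightarrow> 'y) \<Rightarrow> (nat \<Rightarrow> 'x feat) \<Rightarrow> nat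
   \<Rightarrow> ('x,'y) rule list \<Rightarrow> nat \<Rightarrow> ('x,'y) rule list \<Rightarrow> bool" where
  "sr_step m xs ys phis t L e L' \<longleftrightarrow>
     (\<exists>C l. e \<noteq> 0 \<and> map_of L e = Some (C, l) \<and> sat (xs t) C \<and>
        (if l = ys t then L' = L
         else (let C' = C @ [(t, \<lambda>z. \<not> phis t z)] in
               if card (set (map snd C')) \<ge> m
               then L' = filter (\<lambda>q. fst q \<noteq> e) L
               else L' = map (\<lambda>q. if fst q = e then (e, (C', l)) else q) L)))
   \<or> (e = 0 \<and> (\<forall>r\<in>set L. \<not> sat (xs t) (fst (snd r))) \<and>
        (if ys 0 = ys t then L' = L else L' = L @ [(t, ([], ys t))]))"

(* A run of SR-DFF: L t is the rule list before processing x_t (t \<ge> 1),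
   ex t the time index of the explanation at time t. *)
definition sr_run ::
  "nat \<Rightarrow> (nat \<Rightarrow> 'x) \<Rightarrow> (nat \<Rightarrow> 'y) \<Rightarrow> (nat \<Rightarrow> 'x feat)
   \<Rightarrow> (nat \<Rightarrow> ('x,'y) rule list) \<Rightarrow> (nat \<Rightarrow> nat) \<Rightarrow> bool" where
  "sr_run m xs ys phis L ex \<longleftrightarrow>
     L 1 = [] \<and> (\<forall>t\<ge>1. ex t < t \<and> sr_step m xs ys phis t (L t) (ex t) (L (Suc t)))"

(* Example x_t is an exception: the feedback is inconsistent with the
   representation (c*(x) = ell (gi x)). *)
definition exception ::
  "(nat \<Rightarrow> 'y) \<Rightarrow> ('x \<Rightarrow> nat) \<Rightarrow> (nat \<Rightarrow> nat \<Rightarrow> 'x feat)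
   \<Rightarrow> (nat \<Rightarrow> 'x) \<Rightarrow> (nat \<Rightarrow> 'y) \<Rightarrow> (nat \<Rightarrow> 'x feat)
   \<Rightarrow> (nat \<Rightarrow> ('x,'y) rule list) \<Rightarrow> (nat \<Rightarrow> nat) \<Rightarrow> nat \<Rightarrow> bool" where
  "exception ell gi sep xs ys phis L ex t \<longleftrightarrow>
     (if t = 0 then ys 0 \<noteq> ell (gi (xs 0))
      else ys t \<noteq> ell (gi (xs t)) \<or>
           (pred (ys 0) (L t) (ex t) \<noteq> ys t \<and>
            \<not> (ell (gi (xs t)) \<noteq> ell (gi (xs (ex t))) \<and>
               phis t = sep (gi (xs t)) (gi (xs (ex t))))))"

end

theory Submission
  imports Defs
begin

lemma step_keys:
  assumes "sr_step m xs ys phis t L e L'" "\<forall>r\<in>set L. 1 \<le> fst r \<and> fst r < t" "t \<ge> 1"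
  shows "\<forall>r\<in>set L'. 1 \<le> fst r \<and> fst r < Suc t"
proof -
  from assms(1) show ?thesis
  unfolding sr_step_def Let_def
  proof (elim disjE exE conjE)
    fix C l
    assume h: "e \<noteq> 0" "map_of L e = Some (C, l)"
      "if l = ys t then L' = L
        else if m \<le> card (set (map snd (C @ [(t, \<lambda>z. \<not> phis t z)])))
        then L' = filter (\<lambda>q. fst q \<noteq> e) L
        else L' = map (\<lambda>q. if fst q = e then (e, C @ [(t, \<lambda>z. \<not> phis t z)], l) else q) L"
    have mem: "(e, (C, l)) \<in> set L" using h(2) by (rule map_of_SomeD)
    have "fst ` set L' \<subseteq> fst ` set L"
    proof (cases "l = ys t \<or> m \<le> card (set (map snd (C @ [(t, \<lambda>z. \<not> phis t z)])))")
      case True then show ?thesis using h(3) by (auto split: if_splits)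
    next
      case False
      then have L': "L' = map (\<lambda>q. if fst q = e then (e, C @ [(t, \<lambda>z. \<not> phis t z)], l) else q) L"
        using h(3) by simp
      show ?thesis unfolding L' using mem by force
    qed
    then show ?thesis using assms(2,3) by fastforce
  next
    assume "e = 0" "if ys 0 = ys t then L' = L else L' = L @ [(t, [], ys t)]"
    then show ?thesis using assms(2,3) by (auto split: if_splits)
  qed
qed

lemma step_back:
  assumes "sr_step m xs ys phis t L e L'" "(s,(C2,l2)) \<in> set L'" "s \<noteq> t"
  shows "\<exists>C1 l1. (s,(C1,l1)) \<in> set L \<and> set C1 \<subseteq> set C2"
proof -
  from assms(1) show ?thesis
  unfolding sr_step_def Let_def
  proof (elim disjE exE conjE)
    fix C l
    assume h: "e \<noteq> 0" "map_of L e = Some (C, l)"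
      "if l = ys t then L' = L
        else if m \<le> card (set (map snd (C @ [(t, \<lambda>z. \<not> phis t z)])))
        then L' = filter (\<lambda>q. fst q \<noteq> e) L
        else L' = map (\<lambda>q. if fst q = e then (e, C @ [(t, \<lambda>z. \<not> phis t z)], l) else q) L"
    have mem: "(e, (C, l)) \<in> set L" using h(2) by (rule map_of_SomeD)
    show ?thesis
    proof (cases "l = ys t \<or> m \<le> card (set (map snd (C @ [(t, \<lambda>z. \<not> phis t z)])))")
      case True then show ?thesis using h(3) assms(2) by (auto split: if_splits)
    next
      case False
      then have L': "L' = map (\<lambda>q. if fst q = e then (e, C @ [(t, \<lambda>z. \<not> phis t z)], l) else q) L"
        using h(3) by simp
      then obtain q where q: "q \<in> set L" and rq: "(s,(C2,l2)) = (if fst q = e then (e, C @ [(t, \<lambda>z. \<not> phis t z)], l) else q)"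
        using assms(2) by auto
      show ?thesis
      proof (cases "fst q = e")
        case True then show ?thesis using rq mem by auto
      next
        case False then show ?thesis using rq q by auto
      qed
    qed
  next
    assume "e = 0" "if ys 0 = ys t then L' = L else L' = L @ [(t, [], ys t)]"
    then show ?thesis using assms(2,3) by (auto split: if_splits)
  qed
qed

lemma step_create:
  assumes "sr_step m xs ys phis t L e L'" "(t,(C2,l2)) \<in> set L'" "t \<notin> fst ` set L"
  shows "e = 0 \<and> (\<forall>r\<in>set L. \<not> sat (xs t) (fst (snd r)))"
proof -
  from assms(1) show ?thesis
  unfolding sr_step_def Let_def
  proof (elim disjE exE conjE)
    fix C l
    assume h: "e \<noteq> 0" "map_of L e = Some (C, l)"
      "if l = ys t then L' = L
        else if m \<le> card (set (map snd (C @ [(t, \<lambda>z. \<not> phis t z)])))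
        then L' = filter (\<lambda>q. fst q \<noteq> e) L
        else L' = map (\<lambda>q. if fst q = e then (e, C @ [(t, \<lambda>z. \<not> phis t z)], l) else q) L"
    have mem: "(e, (C, l)) \<in> set L" using h(2) by (rule map_of_SomeD)
    have "fst ` set L' \<subseteq> fst ` set L"
    proof (cases "l = ys t \<or> m \<le> card (set (map snd (C @ [(t, \<lambda>z. \<not> phis t z)])))")
      case True then show ?thesis using h(3) by (auto split: if_splits)
    next
      case False
      then have L': "L' = map (\<lambda>q. if fst q = e then (e, C @ [(t, \<lambda>z. \<not> phis t z)], l) else q) L"
        using h(3) by simp
      show ?thesis unfolding L' using mem by force
    qed
    then show ?thesis using assms(2,3) by force
  next
    assume "e = 0" "\<forall>r\<in>set L. \<not> sat (xs t) (fst (snd r))"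
    then show ?thesis by simp
  qed
qed

definition inv_entries where
  "inv_entries ys phis L ex Lt \<longleftrightarrow> (\<forall>(s,(C,l))\<in>set Lt. \<forall>(u,f)\<in>set C.
     1 \<le> u \<and> ex u = s \<and> pred (ys 0) (L u) s \<noteq> ys u \<and> f = (\<lambda>z. \<not> phis u z))"

lemma step_inv:
  assumes "sr_step m xs ys phis t (L t) (ex t) L'" "inv_entries ys phis L ex (L t)" "t \<ge> 1"
  shows "inv_entries ys phis L ex L'"
proof -
  from assms(1) show ?thesis
  unfolding sr_step_def Let_def
  proof (elim disjE exE conjE)
    fix C l
    assume h: "ex t \<noteq> 0" "map_of (L t) (ex t) = Some (C, l)" "sat (xs t) C"
      "if l = ys t then L' = L t
        else if m \<le> card (set (map snd (C @ [(t, \<lambda>z. \<not> phis t z)])))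
        then L' = filter (\<lambda>q. fst q \<noteq> ex t) (L t)
        else L' = map (\<lambda>q. if fst q = ex t then (ex t, C @ [(t, \<lambda>z. \<not> phis t z)], l) else q) (L t)"
    have mem: "(ex t, (C, l)) \<in> set (L t)" using h(2) by (rule map_of_SomeD)
    have pr: "pred (ys 0) (L t) (ex t) = l" using h(1,2) by (simp add: pred_def)
    show ?thesis
    proof (cases "l = ys t")
      case True then show ?thesis using h(4) assms(2) by simp
    next
      case F: False
      show ?thesis
      proof (cases "m \<le> card (set (map snd (C @ [(t, \<lambda>z. \<not> phis t z)])))")
        case True then show ?thesis using h(4) F assms(2) by (auto simp: inv_entries_def)
      next
        case False
        then have L': "L' = map (\<lambda>q. if fst q = ex t then (ex t, C @ [(t, \<lambda>z. \<not> phis t z)], l) else q) (L t)"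
          using h(4) F by simp
        show ?thesis unfolding inv_entries_def
        proof (intro ballI)
          fix r assume r: "r \<in> set L'"
          from r L' have "\<exists>q\<in>set (L t). r = (if fst q = ex t then (ex t, C @ [(t, \<lambda>z. \<not> phis t z)], l) else q)"
            by auto
          then obtain q where q: "q \<in> set (L t)" and rq: "r = (if fst q = ex t then (ex t, C @ [(t, \<lambda>z. \<not> phis t z)], l) else q)"
            by blast
          show "case r of (s, C, l) \<Rightarrow> \<forall>(u, f)\<in>set C. 1 \<le> u \<and> ex u = s \<and> pred (ys 0) (L u) s \<noteq> ys u \<and> f = (\<lambda>z. \<not> phis u z)"
          proof (cases "fst q = ex t")
            case True
            then show ?thesis using rq mem assms(2,3) pr F unfolding inv_entries_def by fastforce
          next
            case False
            then show ?thesis using rq q assms(2) unfolding inv_entries_def by auto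
          qed
        qed
      qed
    qed
  next
    assume "ex t = 0" "\<forall>r\<in>set (L t). \<not> sat (xs t) (fst (snd r))"
      "if ys 0 = ys t then L' = L t else L' = L t @ [(t, [], ys t)]"
    then show ?thesis using assms(2) by (auto simp: inv_entries_def split: if_splits)
  qed
qed

lemma run_keys:
  assumes "sr_run m xs ys phis L ex" "t \<ge> 1"
  shows "\<forall>r\<in>set (L t). 1 \<le> fst r \<and> fst r < t"
  using assms(2)
proof (induction t rule: dec_induct[of 1])
  case base then show ?case using assms(1) by (simp add: sr_run_def)
next
  case (step n)
  then show ?case using assms(1) step_keys unfolding sr_run_def by blast
qed

lemma run_inv:
  assumes "sr_run m xs ys phis L ex" "t \<ge> 1"
  shows "inv_entries ys phis L ex (L t)"
  using assms(2)
proof (induction t rule: dec_induct[of 1])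
  case base then show ?case using assms(1) by (simp add: sr_run_def inv_entries_def)
next
  case (step n)
  then show ?case using assms(1) step_inv unfolding sr_run_def by blast
qed

lemma run_back:
  assumes "sr_run m xs ys phis L ex" "t1 \<ge> 1" "s < t1"
    and "(s,(C2,l2)) \<in> set (L (t1 + d))"
  shows "\<exists>C1 l1. (s,(C1,l1)) \<in> set (L t1) \<and> set C1 \<subseteq> set C2"
  using assms(4)
proof (induction d arbitrary: C2 l2)
  case 0 then show ?case by auto
next
  case (Suc d)
  have "sr_step m xs ys phis (t1+d) (L (t1+d)) (ex (t1+d)) (L (Suc (t1+d)))"
    using assms unfolding sr_run_def by auto
  from step_back[OF this] Suc.prems assms(3) obtain C1 l1 where
    "(s,(C1,l1)) \<in> set (L (t1+d))" "set C1 \<subseteq> set C2" by fastforce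
  then show ?case using Suc.IH by blast
qed

lemma main_dir:
  fixes Phi :: "'x feat set" and G :: "nat \<Rightarrow> 'x set"
  assumes rep: "representation Phi m G ell gi sep"
    and run: "sr_run m xs ys phis L ex"
    and "t \<ge> 1"
    and sC: "(s, (C, l)) \<in> set (L t)" and s'C: "(s', (C', l')) \<in> set (L t)" and "s < s'"
    and val: "\<forall>(u,f)\<in>set C. \<not> exception ell gi sep xs ys phis L ex u"
  shows "G (gi (xs s)) \<noteq> G (gi (xs s'))"
proof
  assume eqG: "G (gi (xs s)) = G (gi (xs s'))"
  have keys: "\<forall>r\<in>set (L t). 1 \<le> fst r \<and> fst r < t" using run_keys[OF run \<open>t \<ge> 1\<close>] .
  have s1: "1 \<le> s" and s't: "s' < t" using keys sC s'C by fastforce+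
  have "s' \<ge> 1" using s1 \<open>s < s'\<close> by simp
  have tt: "t = Suc s' + (t - Suc s')" using s't by simp
  have "(s',(C',l')) \<in> set (L (Suc s' + (t - Suc s')))" using s'C tt by simp
  from run_back[OF run _ lessI this] \<open>s' \<ge> 1\<close>
  obtain C1 l1 where c1: "(s',(C1,l1)) \<in> set (L (Suc s'))" by auto
  have stp: "sr_step m xs ys phis s' (L s') (ex s') (L (Suc s'))"
    using run \<open>s' \<ge> 1\<close> unfolding sr_run_def by auto
  have "s' \<notin> fst ` set (L s')" using run_keys[OF run \<open>s' \<ge> 1\<close>] by auto
  from step_create[OF stp c1 this] have nosat: "\<forall>r\<in>set (L s'). \<not> sat (xs s') (fst (snd r))" by simp
  have ts: "t = s' + (t - s')" using s't by simp
  have "(s,(C,l)) \<in> set (L (s' + (t - s')))" using sC ts by simp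
  from run_back[OF run \<open>s' \<ge> 1\<close> \<open>s < s'\<close> this]
  obtain C2 l2 where c2: "(s,(C2,l2)) \<in> set (L s')" "set C2 \<subseteq> set C" by auto
  from nosat c2(1) have "\<not> sat (xs s') C2" by fastforce
  then obtain u f where uf: "(u,f) \<in> set C2" "\<not> f (xs s')" unfolding sat_def by auto
  then have ufC: "(u,f) \<in> set C" using c2(2) by auto
  have nex: "\<not> exception ell gi sep xs ys phis L ex u" using val ufC by auto
  have iv: "1 \<le> u \<and> ex u = s \<and> pred (ys 0) (L u) s \<noteq> ys u \<and> f = (\<lambda>z. \<not> phis u z)"
    using run_inv[OF run \<open>t \<ge> 1\<close>] sC ufC unfolding inv_entries_def by fastforce
  define i where "i = gi (xs u)"
  define j where "j = gi (xs s)"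
  have hh: "ell i \<noteq> ell j" "phis u = sep i j"
    using nex iv unfolding exception_def i_def j_def by auto
  have im: "i < m" "j < m" using rep unfolding representation_def i_def j_def by auto
  have "sep j i = (\<lambda>z. \<not> sep i j z)" "\<forall>z\<in>G j. sep j i z"
    using rep im hh(1) unfolding representation_def by metis+
  moreover have "xs s' \<in> G j" using rep eqG unfolding representation_def j_def by auto
  ultimately have "f (xs s')" using iv hh(2) by auto
  then show False using uf(2) by simp
qed

theorem lemma2:
  fixes Phi :: "'x feat set" and m k :: nat and G :: "nat \<Rightarrow> 'x set"
    and ell :: "nat \<Rightarrow> 'y::finite" and gi :: "'x \<Rightarrow> nat"
    and sep :: "nat \<Rightarrow> nat \<Rightarrow> 'x feat"
    and xs :: "nat \<Rightarrow> 'x" and ys :: "nat \<Rightarrow> 'y" and phis :: "nat \<Rightarrow> 'x feat"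
    and L :: "nat \<Rightarrow> ('x,'y) rule list" and ex :: "nat \<Rightarrow> nat"
  assumes "representation Phi m G ell gi sep"
    and "sr_run m xs ys phis L ex"
    and "finite {t. exception ell gi sep xs ys phis L ex t}"
    and "card {t. exception ell gi sep xs ys phis L ex t} \<le> k"
    and "t \<ge> 1"
    and "(s, (C, l)) \<in> set (L t)" and "(s', (C', l')) \<in> set (L t)" and "s \<noteq> s'"
    and "\<not> exception ell gi sep xs ys phis L ex s"
    and "\<not> exception ell gi sep xs ys phis L ex s'"
    and "\<forall>(u,f)\<in>set C. \<not> exception ell gi sep xs ys phis L ex u"
    and "\<forall>(u,f)\<in>set C'. \<not> exception ell gi sep xs ys phis L ex u"
  shows "G (gi (xs s)) \<noteq> G (gi (xs s'))"
proof (cases "s < s'")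
  case True
  then show ?thesis using main_dir[OF assms(1,2,5,6,7) True assms(11)] by blast
next
  case False
  then have "s' < s" using assms(8) by simp
  then show ?thesis using main_dir[OF assms(1,2,5,7,6) _ assms(12)] by metis
qed

end
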